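(* Let $\mathcal P$ be a set of pre-tangles in a graph $G$, let $N$ be a nested set of separations of $G$ which efficiently distinguishes $\mathcal P$, and let $(\vec s_i)_{i\in\mathbb N}$ be a strictly increasing sequence of orientations of separations in $N$. If $(\vec s_i)_i$ is strongly $\mathcal P$-relevant, then there is a sequence $(P_i)_{i\in\mathbb N}$ in $\mathcal P$ such that for all $i\in\mathbb N$: $\overleftarrow{s}_i\in P_i$, $\vec s_i\in P_{i+1}$, and $s_i$ efficiently distinguishes $P_i$ and $P_{i+1}$.
   Context: Notation: $s$ denotes a separation (an unordered pair $\{A,B\}$ of subsets of $V(G)$ with $A\cup B=V(G)$ and no edge between $A\setminus B$ and $B\setminus A$; order $|s|=|A\cap B|$), $\vec s,\overleftarrow{s}$ its two orientations; oriented separations are ordered by $(A,B)\le(C,D)$ iff $A\subseteq C$ and $B\supseteq D$. Nested: some orientations comparable. A set $O$ of oriented separations is consistent if there are no $(A,B),(C,D)\in O$ with $\{A,B\}\ne\{C,D\}$ and $(B,A)\le(C,D)$. A pre-tangle is a consistent set $P$ which, for some $k\in\mathbb N\cup\{\aleph_0\}$, contains exactly one orientation of every separation of order $<k$ and nothing else. A separation distinguishes two pre-tangles if both contain an orientation of it but different ones; efficiently if of minimum order among such. $N$ efficiently distinguishes $\mathcal P$ if any two pre-tangles in $\mathcal P$ distinguished by some separation are efficiently distinguished by an element of $N$. A pair $\vec s<\vec t$ is strongly $\mathcal P$-relevant if there are $O,P,Q\in\mathcal P$ such that $s$ efficiently distinguishes $O$ and $P$ with $\vec s\in P$, and $t$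 efficiently distinguishes $P$ and $Q$ with $\overleftarrow{t}\in P$. A strictly increasing sequence $(\vec s_i)$ is strongly $\mathcal P$-relevant if each pair $\vec s_i<\vec s_{i+1}$ is. *)

theory Defs
  imports Main "HOL-Library.Extended_Nat"
begin

definition graph :: "'v set \<Rightarrow> ('v \<Rightarrow> 'v \<Rightarrow> bool) \<Rightarrow> bool" where
  "graph V E \<longleftrightarrow> (\<forall>x y. E x y \<longrightarrow> x \<in> V \<and> y \<in> V \<and> E y x \<and> x \<noteq> y)"

type_synonym 'v osep = "'v set \<times> 'v set"
type_synonym 'v sep = "'v osep set"

definition is_osep :: "'v set \<Rightarrow> ('v \<Rightarrow> 'v \<Rightarrow> bool) \<Rightarrow> 'v osep \<Rightarrow> bool" where
  "is_osep V E x \<longleftrightarrow> (fst x \<union> snd x = V \<and>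
     (\<forall>a \<in> fst x - snd x. \<forall>b \<in> snd x - fst x. \<not> E a b \<and> \<not> E b a))"

definition inv_osep :: "'v osep \<Rightarrow> 'v osep" where
  "inv_osep x = (snd x, fst x)"

text \<open>The unoriented separation {A,B} is represented by the set of its two orientations.\<close>
definition sep_of :: "'v osep \<Rightarrow> 'v sep" where
  "sep_of x = {x, inv_osep x}"

definition is_sep :: "'v set \<Rightarrow> ('v \<Rightarrow> 'v \<Rightarrow> bool) \<Rightarrow> 'v sep \<Rightarrow> bool" where
  "is_sep V E s \<longleftrightarrow> (\<exists>x. is_osep V E x \<and> s = sep_of x)"

definition osep_order :: "'v osep \<Rightarrow> enat" where
  "osep_order x = (if finite (fst x \<inter> snd x) then enat (card (fst x \<inter> snd x)) else \<infinity>)"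

definition sep_order :: "'v sep \<Rightarrow> enat" where
  "sep_order s = (THE k. \<exists>x \<in> s. k = osep_order x)"

definition osep_le :: "'v osep \<Rightarrow> 'v osep \<Rightarrow> bool" where
  "osep_le x y \<longleftrightarrow> fst x \<subseteq> fst y \<and> snd y \<subseteq> snd x"

definition osep_less :: "'v osep \<Rightarrow> 'v osep \<Rightarrow> bool" where
  "osep_less x y \<longleftrightarrow> osep_le x y \<and> x \<noteq> y"

definition nested :: "'v sep \<Rightarrow> 'v sep \<Rightarrow> bool" where
  "nested s t \<longleftrightarrow> (\<exists>x \<in> s. \<exists>y \<in> t. osep_le x y \<or> osep_le y x)"

definition nested_set :: "'v sep set \<Rightarrow> bool" where
  "nested_set N \<longleftrightarrow> (\<forall>s \<in> N. \<forall>t \<in> N. nested s t)"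

definition consistent :: "'v osep set \<Rightarrow> bool" where
  "consistent S \<longleftrightarrow> \<not> (\<exists>x \<in> S. \<exists>y \<in> S. sep_of x \<noteq> sep_of y \<and> osep_le (inv_osep x) y)"

text \<open>Pre-tangle: consistent, and for some k \<in> \<nat> \<union> {aleph0} (here enat, \<infinity> = aleph0) contains
  exactly one orientation of every separation of order < k and nothing else.\<close>
definition pre_tangle :: "'v set \<Rightarrow> ('v \<Rightarrow> 'v \<Rightarrow> bool) \<Rightarrow> 'v osep set \<Rightarrow> bool" where
  "pre_tangle V E P \<longleftrightarrow> consistent P \<and>
     (\<exists>k::enat. (\<forall>x \<in> P. is_osep V E x \<and> osep_order x < k) \<and>
        (\<forall>s. is_sep V E s \<and> sep_order s < k \<longrightarrow> card (s \<inter> P) = 1))"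

definition distinguishes :: "'v set \<Rightarrow> ('v \<Rightarrow> 'v \<Rightarrow> bool) \<Rightarrow> 'v sep \<Rightarrow> 'v osep set \<Rightarrow> 'v osep set \<Rightarrow> bool" where
  "distinguishes V E s P Q \<longleftrightarrow> is_sep V E s \<and>
     (\<exists>x \<in> s. \<exists>y \<in> s. x \<in> P \<and> y \<in> Q \<and> x \<noteq> y)"

definition eff_distinguishes :: "'v set \<Rightarrow> ('v \<Rightarrow> 'v \<Rightarrow> bool) \<Rightarrow> 'v sep \<Rightarrow> 'v osep set \<Rightarrow> 'v osep set \<Rightarrow> bool" where
  "eff_distinguishes V E s P Q \<longleftrightarrow> distinguishes V E s P Q \<and>
     (\<forall>t. distinguishes V E t P Q \<longrightarrow> sep_order s \<le> sep_order t)"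

definition set_eff_distinguishes :: "'v set \<Rightarrow> ('v \<Rightarrow> 'v \<Rightarrow> bool) \<Rightarrow> 'v sep set \<Rightarrow> 'v osep set set \<Rightarrow> bool" where
  "set_eff_distinguishes V E N \<P> \<longleftrightarrow> (\<forall>P \<in> \<P>. \<forall>Q \<in> \<P>.
     (\<exists>s. distinguishes V E s P Q) \<longrightarrow> (\<exists>s \<in> N. eff_distinguishes V E s P Q))"

definition strongly_relevant_pair :: "'v set \<Rightarrow> ('v \<Rightarrow> 'v \<Rightarrow> bool) \<Rightarrow> 'v osep set set \<Rightarrow> 'v osep \<Rightarrow> 'v osep \<Rightarrow> bool" where
  "strongly_relevant_pair V E \<P> x y \<longleftrightarrow> osep_less x y \<and>
     (\<exists>R \<in> \<P>. \<exists>P \<in> \<P>. \<exists>Q \<in> \<P>.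
        eff_distinguishes V E (sep_of x) R P \<and> x \<in> P \<and>
        eff_distinguishes V E (sep_of y) P Q \<and> inv_osep y \<in> P)"

definition strongly_relevant_seq :: "'v set \<Rightarrow> ('v \<Rightarrow> 'v \<Rightarrow> bool) \<Rightarrow> 'v osep set set \<Rightarrow> (nat \<Rightarrow> 'v osep) \<Rightarrow> bool" where
  "strongly_relevant_seq V E \<P> f \<longleftrightarrow> (\<forall>i. strongly_relevant_pair V E \<P> (f i) (f (Suc i)))"

end

theory Submission
  imports Defs
begin

lemma inv_inv[simp]: "inv_osep (inv_osep x) = x"
  by (simp add: inv_osep_def)

lemma sep_of_inv[simp]: "sep_of (inv_osep x) = sep_of x"
  by (auto simp: sep_of_def)

lemma osep_order_inv[simp]: "osep_order (inv_osep x) = osep_order x"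
  by (simp add: osep_order_def inv_osep_def Int_commute)

lemma sep_order_sep_of: "sep_order (sep_of x) = osep_order x"
  unfolding sep_order_def sep_of_def by auto

lemma mem_sep_of: "x \<in> sep_of s \<longleftrightarrow> x = s \<or> x = inv_osep s"
  by (simp add: sep_of_def)

lemma le_inv: "osep_le x y \<Longrightarrow> osep_le (inv_osep y) (inv_osep x)"
  by (simp add: osep_le_def inv_osep_def)

lemma card_pt:
  assumes "pre_tangle V E Z" "z \<in> Z" "is_sep V E t" "sep_order t \<le> osep_order z"
  shows "card (t \<inter> Z) = 1"
proof -
  obtain k where k: "\<forall>x \<in> Z. is_osep V E x \<and> osep_order x < k"
    "\<forall>s. is_sep V E s \<and> sep_order s < k \<longrightarrow> card (s \<inter> Z) = 1"
    using assms(1) unfolding pre_tangle_def by blast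
  have "sep_order t < k" using k(1) assms(2,4) by (meson order.strict_trans1)
  thus ?thesis using k(2) assms(3) by blast
qed

lemma dist_of_cards:
  assumes "card (w \<inter> A) = 1" "card (w \<inter> B) = 1" "w \<inter> A \<noteq> w \<inter> B" "is_sep V E w"
  shows "distinguishes V E w A B"
proof -
  obtain x y where "w \<inter> A = {x}" "w \<inter> B = {y}" using assms(1,2)
    by (metis One_nat_def card_1_singletonE)
  thus ?thesis using assms(3,4) unfolding distinguishes_def by auto
qed

lemma cards_of_dist:
  assumes "card (w \<inter> A) = 1" "card (w \<inter> B) = 1" "distinguishes V E w A B"
  shows "w \<inter> A \<noteq> w \<inter> B"
proof -
  obtain x y where "w \<inter> A = {x}" "w \<inter> B = {y}" using assms(1,2)
    by (metis One_nat_def card_1_singletonE)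
  show ?thesis
  proof
    assume eq: "w \<inter> A = w \<inter> B"
    obtain x' y' where "x' \<in> w" "y' \<in> w" "x' \<in> A" "y' \<in> B" "x' \<noteq> y'"
      using assms(3) unfolding distinguishes_def by blast
    hence "x' \<in> w \<inter> A" "y' \<in> w \<inter> A" using eq by blast+
    thus False using \<open>w \<inter> A = {x}\<close> \<open>x' \<noteq> y'\<close> by simp
  qed
qed

lemma orient:
  assumes "eff_distinguishes V E (sep_of s) A B" "s \<in> B" "pre_tangle V E B"
  shows "inv_osep s \<in> A \<and> s \<noteq> inv_osep s"
proof -
  have d: "distinguishes V E (sep_of s) A B" and iss: "is_sep V E (sep_of s)"
    using assms(1) unfolding eff_distinguishes_def distinguishes_def by auto
  have c: "card (sep_of s \<inter> B) = 1"
    using card_pt[OF assms(3) assms(2) iss] by (simp add: sep_order_sep_of)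
  obtain z where z: "sep_of s \<inter> B = {z}" using c by (metis One_nat_def card_1_singletonE)
  have "s \<in> sep_of s \<inter> B" using assms(2) by (simp add: sep_of_def)
  hence "sep_of s \<inter> B = {s}" using z by auto
  moreover obtain x y where "x \<in> sep_of s" "y \<in> sep_of s" "x \<in> A" "y \<in> B" "x \<noteq> y"
    using d unfolding distinguishes_def by blast
  ultimately have "x \<in> sep_of s \<inter> A" "y \<in> sep_of s \<inter> B" "x \<noteq> y" by blast+
  thus ?thesis using \<open>sep_of s \<inter> _ = {s}\<close> mem_sep_of[of x s] mem_sep_of[of y s] by auto
qed

lemma orient2:
  assumes "eff_distinguishes V E (sep_of s) A B" "s \<in> A" "pre_tangle V E A"
  shows "inv_osep s \<in> B \<and> s \<noteq> inv_osep s"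
proof -
  have d: "distinguishes V E (sep_of s) A B" and iss: "is_sep V E (sep_of s)"
    using assms(1) unfolding eff_distinguishes_def distinguishes_def by auto
  have c: "card (sep_of s \<inter> A) = 1"
    using card_pt[OF assms(3) assms(2) iss] by (simp add: sep_order_sep_of)
  obtain z where z: "sep_of s \<inter> A = {z}" using c by (metis One_nat_def card_1_singletonE)
  have "s \<in> sep_of s \<inter> A" using assms(2) by (simp add: sep_of_def)
  hence "sep_of s \<inter> A = {s}" using z by auto
  moreover obtain x y where "x \<in> sep_of s" "y \<in> sep_of s" "x \<in> A" "y \<in> B" "x \<noteq> y"
    using d unfolding distinguishes_def by blast
  ultimately have "x \<in> sep_of s \<inter> A" "y \<in> sep_of s \<inter> B" "x \<noteq> y" by blast+
  thus ?thesis using \<open>sep_of s \<inter> _ = {s}\<close> mem_sep_of[of x s] mem_sep_of[of y s] by auto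
qed

lemma mid:
  assumes PT: "\<forall>Z\<in>\<P>. pre_tangle V E Z" and NS: "\<forall>t\<in>N. is_sep V E t"
    and nest: "nested_set N" and SE: "set_eff_distinguishes V E N \<P>" and sN: "sep_of s \<in> N"
    and inP: "X\<in>\<P>" "P\<in>\<P>" "P'\<in>\<P>" "Y\<in>\<P>"
    and e1: "eff_distinguishes V E (sep_of s) P X" and e2: "eff_distinguishes V E (sep_of s) Y P'"
    and m: "inv_osep s \<in> P" "s \<in> P'" "s \<in> X" "inv_osep s \<in> Y" "s \<noteq> inv_osep s"
  shows "eff_distinguishes V E (sep_of s) P P'"
proof -
  have iss: "is_sep V E (sep_of s)" using e1 unfolding eff_distinguishes_def distinguishes_def by auto
  have d: "distinguishes V E (sep_of s) P P'" unfolding distinguishes_def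
  proof (intro conjI iss bexI)
    show "inv_osep s \<in> P" "s \<in> P'" "inv_osep s \<noteq> s" using m by auto
    show "inv_osep s \<in> sep_of s" "s \<in> sep_of s" by (simp_all add: sep_of_def)
  qed
  have pts: "pre_tangle V E X" "pre_tangle V E P" "pre_tangle V E P'" "pre_tangle V E Y"
    using PT inP by auto
  define \<sigma> where "\<sigma> = osep_order s"
  have ss: "sep_order (sep_of s) = \<sigma>" by (simp add: \<sigma>_def sep_order_sep_of)
  have C: "card (w \<inter> X) = 1 \<and> card (w \<inter> P) = 1 \<and> card (w \<inter> P') = 1 \<and> card (w \<inter> Y) = 1"
    if "is_sep V E w" "sep_order w < \<sigma>" for w
    using card_pt[OF pts(1) m(3) that(1)] card_pt[OF pts(2) m(1) that(1)]
      card_pt[OF pts(3) m(2) that(1)] card_pt[OF pts(4) m(4) that(1)] that(2)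
    by (simp add: \<sigma>_def)
  have EQ: "w \<inter> P = w \<inter> X \<and> w \<inter> P' = w \<inter> Y"
    if w: "is_sep V E w" "sep_order w < \<sigma>" for w
  proof (rule conjI; rule ccontr)
    assume "w \<inter> P \<noteq> w \<inter> X"
    hence "distinguishes V E w P X" using dist_of_cards C[OF w] w(1) by blast
    hence "\<sigma> \<le> sep_order w" using e1 ss unfolding eff_distinguishes_def by auto
    thus False using w(2) by simp
  next
    assume "w \<inter> P' \<noteq> w \<inter> Y"
    hence "distinguishes V E w Y P'" using dist_of_cards[of w Y P'] C[OF w] w(1) by auto
    hence "\<sigma> \<le> sep_order w" using e2 ss unfolding eff_distinguishes_def by auto
    thus False using w(2) by simp
  qed
  show ?thesis unfolding eff_distinguishes_def
  proof (intro conjI d allI impI)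
    fix t assume dt: "distinguishes V E t P P'"
    show "sep_order (sep_of s) \<le> sep_order t"
    proof (rule ccontr)
      assume "\<not> ?thesis"
      hence lt: "sep_order t < \<sigma>" using ss by simp
      have ist: "is_sep V E t" using dt unfolding distinguishes_def by auto
      have "t \<inter> P \<noteq> t \<inter> P'" using cards_of_dist C[OF ist lt] dt by blast
      hence "t \<inter> X \<noteq> t \<inter> Y" using EQ[OF ist lt] by simp
      hence "distinguishes V E t X Y" using dist_of_cards C[OF ist lt] ist by blast
      then obtain u where uN: "u \<in> N" and eu: "eff_distinguishes V E u X Y"
        using SE inP unfolding set_eff_distinguishes_def by blast
      have isu: "is_sep V E u" using NS uN by auto
      have "sep_order u \<le> sep_order t" using eu \<open>distinguishes V E t X Y\<close>
        unfolding eff_distinguishes_def by auto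
      hence ltu: "sep_order u < \<sigma>" using lt by simp
      have cu: "card (u \<inter> X) = 1" "card (u \<inter> P) = 1" "card (u \<inter> P') = 1" "card (u \<inter> Y) = 1"
        using C[OF isu ltu] by auto
      have neq: "u \<inter> X \<noteq> u \<inter> Y" using cards_of_dist cu eu unfolding eff_distinguishes_def by blast
      have eqs: "u \<inter> P = u \<inter> X" "u \<inter> P' = u \<inter> Y" using EQ[OF isu ltu] by auto
      obtain a where a: "u \<inter> P' = {a}" using cu(3) by (metis One_nat_def card_1_singletonE)
      obtain b where b: "u \<inter> P = {b}" using cu(2) by (metis One_nat_def card_1_singletonE)
      obtain a0 where u0: "u = sep_of a0" using isu unfolding is_sep_def by auto
      have au: "a \<in> u" using a by auto
      have ua: "u = sep_of a" using au u0 mem_sep_of[of a a0] by auto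
      have "b \<noteq> a" using a b eqs neq by auto
      moreover have "b \<in> u" using b by auto
      ultimately have binv: "b = inv_osep a" using ua mem_sep_of[of b a] by auto
      have mem: "a \<in> P'" "a \<in> Y" "inv_osep a \<in> P" "inv_osep a \<in> X"
        using a b binv eqs by auto
      have nsep: "sep_of a \<noteq> sep_of s" using ltu ua ss by auto
      have cons: "consistent X" "consistent P" "consistent P'" "consistent Y"
        using pts unfolding pre_tangle_def by auto
      have nest': "nested u (sep_of s)" using nest uN sN unfolding nested_set_def by auto
      then obtain x y where xy: "x \<in> u" "y \<in> sep_of s" "osep_le x y \<or> osep_le y x"
        unfolding nested_def by auto
      have xs: "x = a \<or> x = inv_osep a" "y = s \<or> y = inv_osep s"
        using xy(1,2) ua mem_sep_of[of x a] mem_sep_of[of y s] by auto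
      have four: "osep_le a s \<or> osep_le s a \<or> osep_le a (inv_osep s) \<or> osep_le (inv_osep s) a"
      proof -
        have l1: "osep_le (inv_osep a) y \<Longrightarrow> osep_le (inv_osep y) a" for y
          using le_inv[of "inv_osep a" y] by simp
        have l2: "osep_le y (inv_osep a) \<Longrightarrow> osep_le a (inv_osep y)" for y
          using le_inv[of y "inv_osep a"] by simp
        show ?thesis using xs xy(3) l1[of s] l1[of "inv_osep s"] l2[of s] l2[of "inv_osep s"]
          by auto
      qed
      have c1: "\<not> (sep_of (inv_osep a) \<noteq> sep_of s \<and> osep_le (inv_osep (inv_osep a)) s)"
        using cons(1) mem(4) m(3) unfolding consistent_def by blast
      have c2: "\<not> (sep_of a \<noteq> sep_of (inv_osep s) \<and> osep_le (inv_osep a) (inv_osep s))"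
        using cons(4) mem(2) m(4) unfolding consistent_def by blast
      have c3: "\<not> (sep_of (inv_osep a) \<noteq> sep_of (inv_osep s) \<and> osep_le (inv_osep (inv_osep a)) (inv_osep s))"
        using cons(2) mem(3) m(1) unfolding consistent_def by blast
      have c4: "\<not> (sep_of a \<noteq> sep_of s \<and> osep_le (inv_osep a) s)"
        using cons(3) mem(1) m(2) unfolding consistent_def by blast
      have "osep_le s a \<Longrightarrow> osep_le (inv_osep a) (inv_osep s)" by (rule le_inv)
      moreover have "osep_le (inv_osep s) a \<Longrightarrow> osep_le (inv_osep a) s"
        using le_inv[of "inv_osep s" a] by simp
      ultimately show False using four c1 c2 c3 c4 nsep by auto
    qed
  qed
qed

theorem mainTheorem14:
  fixes V :: "'v set" and E :: "'v \<Rightarrow> 'v \<Rightarrow> bool"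
    and \<P> :: "'v osep set set" and N :: "'v sep set" and s :: "nat \<Rightarrow> 'v osep"
  assumes "graph V E"
    and "\<forall>P \<in> \<P>. pre_tangle V E P"
    and "\<forall>t \<in> N. is_sep V E t"
    and "nested_set N"
    and "set_eff_distinguishes V E N \<P>"
    and "\<forall>i. sep_of (s i) \<in> N"
    and "\<forall>i. osep_less (s i) (s (Suc i))"
    and "strongly_relevant_seq V E \<P> s"
  shows "\<exists>P :: nat \<Rightarrow> 'v osep set. \<forall>i. P i \<in> \<P> \<and>
           inv_osep (s i) \<in> P i \<and> s i \<in> P (Suc i) \<and>
           eff_distinguishes V E (sep_of (s i)) (P i) (P (Suc i))"
proof -
  have "\<forall>i. \<exists>RMQ. fst RMQ \<in> \<P> \<and> fst (snd RMQ) \<in> \<P> \<and> snd (snd RMQ) \<in> \<P> \<and>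
        eff_distinguishes V E (sep_of (s i)) (fst RMQ) (fst (snd RMQ)) \<and> s i \<in> fst (snd RMQ) \<and>
        eff_distinguishes V E (sep_of (s (Suc i))) (fst (snd RMQ)) (snd (snd RMQ)) \<and>
        inv_osep (s (Suc i)) \<in> fst (snd RMQ)"
  proof
    fix i
    from assms(8) obtain R M Q where "R \<in> \<P>" "M \<in> \<P>" "Q \<in> \<P>"
      "eff_distinguishes V E (sep_of (s i)) R M" "s i \<in> M"
      "eff_distinguishes V E (sep_of (s (Suc i))) M Q" "inv_osep (s (Suc i)) \<in> M"
      unfolding strongly_relevant_seq_def strongly_relevant_pair_def by blast
    thus "\<exists>RMQ. fst RMQ \<in> \<P> \<and> fst (snd RMQ) \<in> \<P> \<and> snd (snd RMQ) \<in> \<P> \<and>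
        eff_distinguishes V E (sep_of (s i)) (fst RMQ) (fst (snd RMQ)) \<and> s i \<in> fst (snd RMQ) \<and>
        eff_distinguishes V E (sep_of (s (Suc i))) (fst (snd RMQ)) (snd (snd RMQ)) \<and>
        inv_osep (s (Suc i)) \<in> fst (snd RMQ)"
      by (intro exI[of _ "(R,M,Q)"]) simp
  qed
  from choice[OF this] obtain f where f: "\<forall>i. fst (f i) \<in> \<P> \<and> fst (snd (f i)) \<in> \<P> \<and> snd (snd (f i)) \<in> \<P> \<and>
        eff_distinguishes V E (sep_of (s i)) (fst (f i)) (fst (snd (f i))) \<and> s i \<in> fst (snd (f i)) \<and>
        eff_distinguishes V E (sep_of (s (Suc i))) (fst (snd (f i))) (snd (snd (f i))) \<and>
        inv_osep (s (Suc i)) \<in> fst (snd (f i))"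
    by (elim exE)
  define R where "R i = fst (f i)" for i
  define M where "M i = fst (snd (f i))" for i
  define Q where "Q i = snd (snd (f i))" for i
  have F: "R i \<in> \<P>" "M i \<in> \<P>" "Q i \<in> \<P>"
    "eff_distinguishes V E (sep_of (s i)) (R i) (M i)" "s i \<in> M i"
    "eff_distinguishes V E (sep_of (s (Suc i))) (M i) (Q i)" "inv_osep (s (Suc i)) \<in> M i" for i
    using spec[OF f, of i] unfolding R_def M_def Q_def by auto
  define P where "P i = (case i of 0 \<Rightarrow> R 0 | Suc j \<Rightarrow> M j)" for i
  have "P i \<in> \<P> \<and> inv_osep (s i) \<in> P i \<and> s i \<in> P (Suc i) \<and>
           eff_distinguishes V E (sep_of (s i)) (P i) (P (Suc i))" for i
  proof (cases i)
    case 0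
    have "inv_osep (s 0) \<in> R 0" using orient[OF F(4)[of 0] F(5)[of 0]] F(2) assms(2) by blast
    thus ?thesis using 0 F by (simp add: P_def)
  next
    case (Suc j)
    have o1: "s i \<in> Q j" "s i \<noteq> inv_osep (s i)"
      using orient2[of V E "inv_osep (s i)" "M j" "Q j"] F(6)[of j] F(7)[of j] F(2)[of j] assms(2) Suc
      by auto
    have o2: "inv_osep (s i) \<in> R i"
      using orient[OF F(4)[of i] F(5)[of i]] F(2) assms(2) by blast
    have "eff_distinguishes V E (sep_of (s i)) (M j) (M i)"
      using mid[OF assms(2,3,4,5) assms(6)[rule_format, of i] F(3)[of j] F(2)[of j] F(2)[of i] F(1)[of i]]
        F(6)[of j] F(4)[of i] F(7)[of j] F(5)[of i] o1 o2 Suc by auto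
    thus ?thesis using Suc F by (simp add: P_def)
  qed
  thus ?thesis by blast
qed

end
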